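(* Let $(M,\cdot,1)$ be an arbitrary monoid, $\Sigma$ a finite alphabet, and $\ell:\Sigma^*\to M$ an $M$-language. The following two conditions are equivalent: (i) $\ell$ is a recognizable $M$-language; (ii) there exists a factorization $(g,f)$ on $L$ such that the right congruence $\equiv^{(g,f)}_{f(\ell)}$ on $\Sigma^*$ has finite index.
   Context: $\Sigma^*$ is the free monoid of finite words over $\Sigma$, with empty word $\varepsilon$. An $M$-language is a total function $\ell:\Sigma^*\to M$; $L$ denotes the set of all $M$-languages. For $m\in M$, $\ell\in L$, $m\cdot\ell\in L$ is defined by $(m\cdot\ell)(\gamma)=m\cdot\ell(\gamma)$. Let $F$ be the set of all functions $L\to L$ (with $f_e$ the identity) and $G$ the set of all functions $L\to M$. A factorization on $L$ is a pair $(g,f)\in G\times F$ with $g(\ell)\cdot f(\ell)=\ell$ for every $\ell\in L$. For a word $\alpha$, $\Delta_\alpha\in F$ is defined by $\Delta_\alpha(\ell)(\gamma)=\ell(\alpha\gamma)$. Given a factorization $(g,f)$, define $S^{(g,f)}_\alpha\in F$ for $\alpha\in\Sigma^*$ recursively by $S^{(g,f)}_\varepsilon=f_e$ and $S^{(g,f)}_{\alpha\sigma}=f\circ\Delta_\sigma\circ S^{(g,f)}_\alpha$ for $\sigma\in\Sigma$. For $\ell\in L$, the relation $\equiv^{(g,f)}_\ell$ on $\Sigma^*$ is $\alpha\equiv^{(g,f)}_\ell\beta\iff S^{(g,f)}_\alpha(\ell)=S^{(g,f)}_\beta(\ell)$; it is a right congruence, and it has finite index if it has finitely many equivalence classes.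 An $M$-DFA is a tuple $A=(Q,\Sigma,u,i_u,\delta,w,\rho)$ with $Q$ a finite nonempty set of states, $u\in Q$ the initial state, $i_u\in M$ the initial value, $\delta:Q\times\Sigma\to Q$ the state-transition function, $w:Q\times\Sigma\to M$ the monoid-transition function and $\rho:Q\to M$ the final function. Extend $\delta$ to $\Sigma^*$ by $q\varepsilon=q$, $q(\alpha\sigma)=\delta(q\alpha,\sigma)$ (writing $q\alpha$ for the extended $\delta(q,\alpha)$), and $w$ by $w^*(q,\varepsilon)=1$, $w^*(q,\alpha\sigma)=w^*(q,\alpha)\cdot w(q\alpha,\sigma)$. The $M$-language recognized by $A$ is $\mathcal{A}(\alpha)=i_u\cdot w^*(u,\alpha)\cdot\rho(u\alpha)$. An $M$-language is recognizable if it is recognized by some $M$-DFA. *)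

theory Defs
  imports Main
begin

type_synonym ('a, 'm) mlang = "'a list \<Rightarrow> 'm"

definition is_factorization ::
  "(('a, 'm::monoid_mult) mlang \<Rightarrow> 'm) \<Rightarrow> (('a, 'm) mlang \<Rightarrow> ('a, 'm) mlang) \<Rightarrow> bool" where
  "is_factorization g f \<longleftrightarrow> (\<forall>l. (\<lambda>\<gamma>. g l * f l \<gamma>) = l)"

definition Delta :: "'a list \<Rightarrow> ('a, 'm) mlang \<Rightarrow> ('a, 'm) mlang" where
  "Delta \<alpha> l = (\<lambda>\<gamma>. l (\<alpha> @ \<gamma>))"

text \<open>S_eps = id, S_(alpha sigma) = f o Delta_sigma o S_alpha (left-to-right fold).\<close>
definition S_fact ::
  "(('a, 'm) mlang \<Rightarrow> 'm) \<Rightarrow> (('a, 'm) mlang \<Rightarrow> ('a, 'm) mlang) \<Rightarrow> 'a list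
     \<Rightarrow> ('a, 'm) mlang \<Rightarrow> ('a, 'm) mlang" where
  "S_fact g f \<alpha> = fold (\<lambda>\<sigma> h. f \<circ> Delta [\<sigma>] \<circ> h) \<alpha> id"

definition cong_rel ::
  "(('a, 'm) mlang \<Rightarrow> 'm) \<Rightarrow> (('a, 'm) mlang \<Rightarrow> ('a, 'm) mlang) \<Rightarrow> ('a, 'm) mlang
     \<Rightarrow> ('a list \<times> 'a list) set" where
  "cong_rel g f l = {(\<alpha>, \<beta>). S_fact g f \<alpha> l = S_fact g f \<beta> l}"

definition finite_index :: "('b \<times> 'b) set \<Rightarrow> bool" where
  "finite_index R \<longleftrightarrow> finite (UNIV // R)"

text \<open>M-DFAs: states are natural numbers drawn from a finite nonempty set Q
  (every finite state set is in bijection with such a set).\<close>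

definition delta_star :: "(nat \<Rightarrow> 'a \<Rightarrow> nat) \<Rightarrow> nat \<Rightarrow> 'a list \<Rightarrow> nat" where
  "delta_star \<delta> q \<alpha> = fold (\<lambda>\<sigma> p. \<delta> p \<sigma>) \<alpha> q"

text \<open>w^*(q, eps) = 1, w^*(q, alpha sigma) = w^*(q, alpha) * w(q alpha, sigma).\<close>
definition w_star :: "(nat \<Rightarrow> 'a \<Rightarrow> nat) \<Rightarrow> (nat \<Rightarrow> 'a \<Rightarrow> 'm::monoid_mult) \<Rightarrow> nat \<Rightarrow> 'a list \<Rightarrow> 'm" where
  "w_star \<delta> w q \<alpha> = snd (fold (\<lambda>\<sigma> (p, m). (\<delta> p \<sigma>, m * w p \<sigma>)) \<alpha> (q, 1))"

definition is_MDFA :: "nat set \<Rightarrow> nat \<Rightarrow> (nat \<Rightarrow> 'a \<Rightarrow> nat) \<Rightarrow> bool" where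
  "is_MDFA Q u \<delta> \<longleftrightarrow> finite Q \<and> Q \<noteq> {} \<and> u \<in> Q \<and> (\<forall>q\<in>Q. \<forall>\<sigma>. \<delta> q \<sigma> \<in> Q)"

definition MDFA_lang ::
  "nat \<Rightarrow> 'm::monoid_mult \<Rightarrow> (nat \<Rightarrow> 'a \<Rightarrow> nat) \<Rightarrow> (nat \<Rightarrow> 'a \<Rightarrow> 'm) \<Rightarrow> (nat \<Rightarrow> 'm) \<Rightarrow> ('a, 'm) mlang" where
  "MDFA_lang u iu \<delta> w \<rho> = (\<lambda>\<alpha>. iu * w_star \<delta> w u \<alpha> * \<rho> (delta_star \<delta> u \<alpha>))"

definition recognizable :: "('a, 'm::monoid_mult) mlang \<Rightarrow> bool" where
  "recognizable l \<longleftrightarrow> (\<exists>Q u iu \<delta> w \<rho>. is_MDFA Q u \<delta> \<and> MDFA_lang u iu \<delta> w \<rho> = l)"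

end

theory Submission
  imports Defs
begin

lemma quot_eq:
  "UNIV // {(a,b). h a = h b} = (\<lambda>v. h -` {v}) ` range h"
proof -
  have "{y. h x = h y} = h -` {h x}" for x by auto
  then show ?thesis unfolding quotient_def by (auto simp: Image_def)
qed

lemma fin_idx_iff:
  "finite_index (cong_rel g f l) \<longleftrightarrow> finite (range (\<lambda>\<alpha>. S_fact g f \<alpha> l))"
proof -
  let ?h = "\<lambda>\<alpha>. S_fact g f \<alpha> l"
  have e: "cong_rel g f l = {(a,b). ?h a = ?h b}" by (simp add: cong_rel_def)
  have inj: "inj_on (\<lambda>v. ?h -` {v}) (range ?h)"
    by (rule inj_onI) auto
  show ?thesis unfolding finite_index_def e quot_eq
    using finite_imageD[OF _ inj] by auto
qed

lemma S_snoc: "S_fact g f (\<alpha> @ [\<sigma>]) l = f (Delta [\<sigma>] (S_fact g f \<alpha> l))"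
  by (simp add: S_fact_def)

lemma S_nil: "S_fact g f [] l = l"
  by (simp add: S_fact_def)

lemma fold_w:
  "fold (\<lambda>\<sigma> (p, m). (\<delta> p \<sigma>, m * w p \<sigma>)) \<gamma> (p, m) = (delta_star \<delta> p \<gamma>, m * w_star \<delta> w p \<gamma>)"
proof (induction \<gamma> arbitrary: p m)
  case Nil
  then show ?case by (simp add: delta_star_def w_star_def)
next
  case (Cons a \<gamma>)
  have "w_star \<delta> w p (a # \<gamma>) = w p a * w_star \<delta> w (\<delta> p a) \<gamma>"
    using Cons[of "\<delta> p a" "1 * w p a"] by (simp add: w_star_def)
  then show ?case using Cons[of "\<delta> p a" "m * w p a"]
    by (simp add: delta_star_def mult.assoc)
qed

lemma w_star_Cons: "w_star \<delta> w p (a # \<gamma>) = w p a * w_star \<delta> w (\<delta> p a) \<gamma>"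
  using fold_w[of \<delta> w \<gamma> "\<delta> p a" "1 * w p a"] by (simp add: w_star_def)

lemma w_star_snoc: "w_star \<delta> w p (\<gamma> @ [a]) = w_star \<delta> w p \<gamma> * w (delta_star \<delta> p \<gamma>) a"
proof -
  have "fold (\<lambda>\<sigma> (p, m). (\<delta> p \<sigma>, m * w p \<sigma>)) (\<gamma> @ [a]) (p, 1)
     = (\<lambda>(q, m). (\<delta> q a, m * w q a)) (fold (\<lambda>\<sigma> (p, m). (\<delta> p \<sigma>, m * w p \<sigma>)) \<gamma> (p, 1))"
    by simp
  also have "\<dots> = (\<delta> (delta_star \<delta> p \<gamma>) a, w_star \<delta> w p \<gamma> * w (delta_star \<delta> p \<gamma>) a)"
    using fold_w[of \<delta> w \<gamma> p 1] by simp
  finally show ?thesis by (simp add: w_star_def)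
qed

lemma w_star_nil: "w_star \<delta> w p [] = 1"
  by (simp add: w_star_def)

lemma delta_star_Cons: "delta_star \<delta> p (a # \<gamma>) = delta_star \<delta> (\<delta> p a) \<gamma>"
  by (simp add: delta_star_def)

lemma delta_star_snoc: "delta_star \<delta> p (\<gamma> @ [a]) = \<delta> (delta_star \<delta> p \<gamma>) a"
  by (simp add: delta_star_def)

lemma delta_star_nil: "delta_star \<delta> p [] = p"
  by (simp add: delta_star_def)

theorem theorem1:
  fixes l :: "'a::finite list \<Rightarrow> 'm::monoid_mult"
  shows "recognizable l \<longleftrightarrow>
    (\<exists>g f. is_factorization g f \<and> finite_index (cong_rel g f (f l)))"
proof
  assume "recognizable l"
  then obtain Q u iu \<delta> w \<rho> where A: "is_MDFA Q u \<delta>" and L: "MDFA_lang u iu \<delta> w \<rho> = l"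
    unfolding recognizable_def by blast
  define Lq where "Lq q = (\<lambda>\<gamma>. w_star \<delta> w q \<gamma> * \<rho> (delta_star \<delta> q \<gamma>))" for q
  define P where "P l' \<longleftrightarrow> (\<exists>m q. q \<in> Q \<and> l' = (\<lambda>\<gamma>. m * Lq q \<gamma>))" for l' :: "('a,'m) mlang"
  define pick where "pick l' = (SOME (m,q). q \<in> Q \<and> l' = (\<lambda>\<gamma>. m * Lq q \<gamma>))" for l' :: "('a,'m) mlang"
  define g where "g l' = (if P l' then fst (pick l') else 1)" for l'
  define f where "f l' = (if P l' then Lq (snd (pick l')) else l')" for l'
  have pk: "snd (pick l') \<in> Q \<and> l' = (\<lambda>\<gamma>. fst (pick l') * Lq (snd (pick l')) \<gamma>)" if "P l'" for l'
  proof -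
    from that obtain m q where "q \<in> Q \<and> l' = (\<lambda>\<gamma>. m * Lq q \<gamma>)" unfolding P_def by blast
    then have "\<exists>x. (case x of (m,q) \<Rightarrow> q \<in> Q \<and> l' = (\<lambda>\<gamma>. m * Lq q \<gamma>))" by auto
    from someI_ex[OF this] show ?thesis unfolding pick_def by (auto split: prod.splits)
  qed
  have fac: "is_factorization g f"
    unfolding is_factorization_def
  proof
    fix l'
    show "(\<lambda>\<gamma>. g l' * f l' \<gamma>) = l'"
    proof (cases "P l'")
      case True
      show ?thesis using pk[OF True] True unfolding g_def f_def by metis
    next
      case False
      then show ?thesis unfolding g_def f_def by simp
    qed
  qed
  have fP: "\<exists>q\<in>Q. f l' = Lq q" if "P l'" for l'
    using pk[OF that] that unfolding f_def by auto
  have Pl: "P l"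
    unfolding P_def using A L
    by (intro exI[of _ iu] exI[of _ u])
       (auto simp: is_MDFA_def MDFA_lang_def Lq_def mult.assoc)
  have Dl: "Delta [\<sigma>] (Lq q) = (\<lambda>\<gamma>. w q \<sigma> * Lq (\<delta> q \<sigma>) \<gamma>)" for q \<sigma>
    by (auto simp: Delta_def Lq_def w_star_Cons delta_star_Cons mult.assoc)
  have inv: "\<exists>q\<in>Q. S_fact g f \<alpha> (f l) = Lq q" for \<alpha>
  proof (induction \<alpha> rule: rev_induct)
    case Nil
    then show ?case using fP[OF Pl] by (simp add: S_nil)
  next
    case (snoc \<sigma> \<alpha>)
    then obtain q where q: "q \<in> Q" "S_fact g f \<alpha> (f l) = Lq q" by blast
    have "\<delta> q \<sigma> \<in> Q" using A q by (auto simp: is_MDFA_def)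
    then have "P (Delta [\<sigma>] (Lq q))" unfolding P_def Dl by blast
    then show ?case using fP by (simp add: S_snoc q(2))
  qed
  have "range (\<lambda>\<alpha>. S_fact g f \<alpha> (f l)) \<subseteq> Lq ` Q" using inv by blast
  moreover have "finite Q" using A by (simp add: is_MDFA_def)
  ultimately have "finite (range (\<lambda>\<alpha>. S_fact g f \<alpha> (f l)))" using finite_subset by blast
  then show "\<exists>g f. is_factorization g f \<and> finite_index (cong_rel g f (f l))"
    using fac fin_idx_iff by blast
next
  assume "\<exists>g f. is_factorization g f \<and> finite_index (cong_rel g f (f l))"
  then obtain g f where fac: "is_factorization g f" and fi: "finite_index (cong_rel g f (f l))"
    by blast
  define l0 where "l0 = f l"
  define h where "h \<alpha> = S_fact g f \<alpha> l0" for \<alpha>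
  define R where "R = range h"
  have finR: "finite R" using fi fin_idx_iff unfolding R_def h_def l0_def by blast
  define n where "n = card R"
  obtain enum where bij: "bij_betw enum {..<n} R"
    using ex_bij_betw_nat_finite[OF finR] unfolding n_def atLeast0LessThan by blast
  define N where "N = {..<n}"
  define ix where "ix x = inv_into N enum x" for x
  have ixN: "ix x \<in> N" and enix: "enum (ix x) = x" if "x \<in> R" for x
    using that bij unfolding ix_def N_def
    by (auto simp: bij_betw_def inv_into_into f_inv_into_f)
  have enR: "enum q \<in> R" if "q \<in> N" for q using bij that unfolding N_def bij_betw_def by auto
  have hsnoc: "h (\<alpha> @ [\<sigma>]) = f (Delta [\<sigma>] (h \<alpha>))" for \<alpha> \<sigma>
    unfolding h_def by (rule S_snoc)
  have hR: "h \<alpha> \<in> R" for \<alpha> unfolding R_def by simp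
  define \<delta> where "\<delta> q \<sigma> = ix (f (Delta [\<sigma>] (enum q)))" for q \<sigma>
  define w where "w q \<sigma> = g (Delta [\<sigma>] (enum q))" for q \<sigma>
  define \<rho> where "\<rho> q = enum q []" for q
  define u where "u = ix l0"
  have l0R: "l0 = h []" unfolding h_def by (simp add: S_nil)
  have st: "delta_star \<delta> u \<alpha> \<in> N \<and> enum (delta_star \<delta> u \<alpha>) = h \<alpha>" for \<alpha>
  proof (induction \<alpha> rule: rev_induct)
    case Nil
    then show ?case using ixN enix hR l0R unfolding u_def by (simp add: delta_star_nil)
  next
    case (snoc \<sigma> \<alpha>)
    then show ?case unfolding delta_star_snoc \<delta>_def
      using ixN enix hR hsnoc by metis
  qed
  have MD: "is_MDFA N u \<delta>"
    unfolding is_MDFA_def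
  proof (intro conjI ballI allI)
    show "finite N" unfolding N_def by simp
    show "u \<in> N" using st[of "[]"] by (simp add: delta_star_nil)
    then show "N \<noteq> {}" by blast
    fix q \<sigma> assume "q \<in> N"
    then obtain \<alpha> where "enum q = h \<alpha>" using enR R_def by blast
    then show "\<delta> q \<sigma> \<in> N" unfolding \<delta>_def using hsnoc ixN hR by metis
  qed
  have fd: "g l' * f l' \<gamma> = l' \<gamma>" for l' \<gamma>
    using fac unfolding is_factorization_def by metis
  have key: "l0 (\<alpha> @ \<gamma>) = w_star \<delta> w u \<alpha> * h \<alpha> \<gamma>" for \<alpha> \<gamma>
  proof (induction \<alpha> arbitrary: \<gamma> rule: rev_induct)
    case Nil
    then show ?case by (simp add: w_star_nil l0R)
  next
    case (snoc \<sigma> \<alpha>)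
    have "l0 ((\<alpha> @ [\<sigma>]) @ \<gamma>) = w_star \<delta> w u \<alpha> * h \<alpha> (\<sigma> # \<gamma>)"
      using snoc by simp
    also have "h \<alpha> (\<sigma> # \<gamma>) = Delta [\<sigma>] (h \<alpha>) \<gamma>" by (simp add: Delta_def)
    also have "\<dots> = g (Delta [\<sigma>] (h \<alpha>)) * h (\<alpha> @ [\<sigma>]) \<gamma>" using fd hsnoc by metis
    also have "g (Delta [\<sigma>] (h \<alpha>)) = w (delta_star \<delta> u \<alpha>) \<sigma>" unfolding w_def using st by simp
    finally show ?case by (simp add: w_star_snoc mult.assoc)
  qed
  have "MDFA_lang u (g l) \<delta> w \<rho> = l"
  proof
    fix \<alpha>
    have "l \<alpha> = g l * l0 \<alpha>" using fd l0_def by metis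
    also have "l0 \<alpha> = w_star \<delta> w u \<alpha> * h \<alpha> []" using key[of \<alpha> "[]"] by simp
    also have "h \<alpha> [] = \<rho> (delta_star \<delta> u \<alpha>)" unfolding \<rho>_def using st by simp
    finally show "MDFA_lang u (g l) \<delta> w \<rho> \<alpha> = l \<alpha>" by (simp add: MDFA_lang_def mult.assoc)
  qed
  then show "recognizable l" unfolding recognizable_def using MD by blast
qed

end
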